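(* Let $G=(V,E)$ be a finite, simple, connected reflective graph and let $z\in V$. Suppose the subgraph induced on $S_1(z)$ is disconnected. Then $G$ is a cartesian product of two non-trivial graphs.
   Context: $d$ is the combinatorial distance and $S_1(z)=\{v:d(v,z)=1\}$. For adjacent $x\sim y$ let $V_x^y=\{v: d(v,x)<d(v,y)\}$, $V^{xy}=\{v:d(v,x)=d(v,y)\}$. A reflection from $x$ to $y$ is a graph automorphism $\phi$ with $\phi\circ\phi=\mathrm{id}$, $\phi(x)=y$, such that the edges between $V_x^y$ and $V_y^x$ are exactly $\{\{x',\phi(x')\}:x'\in V_x^y\}$ and $\phi$ fixes $V^{xy}$ pointwise. $G$ is reflective if every edge admits a reflection. Cartesian product: $(a,b)\sim(a',b')$ iff ($a=a'$, $b\sim b'$) or ($a\sim a'$, $b=b'$); non-trivial means having at least two vertices. *)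

theory Defs
  imports Main
begin

definition simple_graph :: "'a set \<Rightarrow> ('a \<Rightarrow> 'a \<Rightarrow> bool) \<Rightarrow> bool" where
  "simple_graph V E \<longleftrightarrow> finite V \<and> (\<forall>u v. E u v \<longrightarrow> u \<in> V \<and> v \<in> V)
     \<and> (\<forall>u v. E u v \<longrightarrow> E v u) \<and> (\<forall>u. \<not> E u u)"

definition gdist :: "('a \<Rightarrow> 'a \<Rightarrow> bool) \<Rightarrow> 'a \<Rightarrow> 'a \<Rightarrow> nat" where
  "gdist E u v = (LEAST n. (E ^^ n) u v)"

definition connected_graph :: "'a set \<Rightarrow> ('a \<Rightarrow> 'a \<Rightarrow> bool) \<Rightarrow> bool" where
  "connected_graph V E \<longleftrightarrow> (\<forall>u\<in>V. \<forall>v\<in>V. \<exists>n. (E ^^ n) u v)"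

definition induced :: "('a \<Rightarrow> 'a \<Rightarrow> bool) \<Rightarrow> 'a set \<Rightarrow> 'a \<Rightarrow> 'a \<Rightarrow> bool" where
  "induced E S = (\<lambda>x y. E x y \<and> x \<in> S \<and> y \<in> S)"

definition disconnected_graph :: "'a set \<Rightarrow> ('a \<Rightarrow> 'a \<Rightarrow> bool) \<Rightarrow> bool" where
  "disconnected_graph V E \<longleftrightarrow> (\<exists>u\<in>V. \<exists>v\<in>V. \<not> (\<exists>n. (E ^^ n) u v))"

definition sphere1 :: "'a set \<Rightarrow> ('a \<Rightarrow> 'a \<Rightarrow> bool) \<Rightarrow> 'a \<Rightarrow> 'a set" where
  "sphere1 V E z = {v \<in> V. gdist E v z = 1}"

definition half :: "'a set \<Rightarrow> ('a \<Rightarrow> 'a \<Rightarrow> bool) \<Rightarrow> 'a \<Rightarrow> 'a \<Rightarrow> 'a set" where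
  "half V E x y = {v \<in> V. gdist E v x < gdist E v y}"

definition equi :: "'a set \<Rightarrow> ('a \<Rightarrow> 'a \<Rightarrow> bool) \<Rightarrow> 'a \<Rightarrow> 'a \<Rightarrow> 'a set" where
  "equi V E x y = {v \<in> V. gdist E v x = gdist E v y}"

definition automorphism :: "'a set \<Rightarrow> ('a \<Rightarrow> 'a \<Rightarrow> bool) \<Rightarrow> ('a \<Rightarrow> 'a) \<Rightarrow> bool" where
  "automorphism V E \<phi> \<longleftrightarrow> bij_betw \<phi> V V \<and> (\<forall>u\<in>V. \<forall>v\<in>V. E u v \<longleftrightarrow> E (\<phi> u) (\<phi> v))"

definition reflection :: "'a set \<Rightarrow> ('a \<Rightarrow> 'a \<Rightarrow> bool) \<Rightarrow> 'a \<Rightarrow> 'a \<Rightarrow> ('a \<Rightarrow> 'a) \<Rightarrow> bool" where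
  "reflection V E x y \<phi> \<longleftrightarrow> automorphism V E \<phi> \<and> (\<forall>v\<in>V. \<phi> (\<phi> v) = v) \<and> \<phi> x = y
     \<and> {{a, b} | a b. a \<in> half V E x y \<and> b \<in> half V E y x \<and> E a b}
        = {{a, \<phi> a} | a. a \<in> half V E x y}
     \<and> (\<forall>v\<in>equi V E x y. \<phi> v = v)"

definition reflective :: "'a set \<Rightarrow> ('a \<Rightarrow> 'a \<Rightarrow> bool) \<Rightarrow> bool" where
  "reflective V E \<longleftrightarrow> (\<forall>x\<in>V. \<forall>y\<in>V. E x y \<longrightarrow> (\<exists>\<phi>. reflection V E x y \<phi>))"

definition cart_adj :: "('b \<Rightarrow> 'b \<Rightarrow> bool) \<Rightarrow> ('c \<Rightarrow> 'c \<Rightarrow> bool) \<Rightarrow> 'b \<times> 'c \<Rightarrow> 'b \<times> 'c \<Rightarrow> bool" where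
  "cart_adj EA EB p q \<longleftrightarrow> (fst p = fst q \<and> EB (snd p) (snd q)) \<or> (EA (fst p) (fst q) \<and> snd p = snd q)"

text \<open>G is (isomorphic to) a Cartesian product of two non-trivial simple graphs.
  Factor graphs are finite (at most |V| vertices), so vertices of type nat suffice.\<close>
definition is_cartesian_product :: "'a set \<Rightarrow> ('a \<Rightarrow> 'a \<Rightarrow> bool) \<Rightarrow> bool" where
  "is_cartesian_product V E \<longleftrightarrow>
     (\<exists>(A::nat set) EA (B::nat set) EB f.
        simple_graph A EA \<and> simple_graph B EB \<and> card A \<ge> 2 \<and> card B \<ge> 2
        \<and> bij_betw f V (A \<times> B)
        \<and> (\<forall>u\<in>V. \<forall>v\<in>V. E u v \<longleftrightarrow> cart_adj EA EB (f u) (f v)))"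

end

theory Submission
  imports Defs
begin

locale rg =
  fixes V :: "'a set" and E :: "'a \<Rightarrow> 'a \<Rightarrow> bool"
  assumes sg: "simple_graph V E" and cg: "connected_graph V E" and rf: "reflective V E"
begin

abbreviation d where "d \<equiv> gdist E"

lemma finV: "finite V" using sg by (simp add: simple_graph_def)
lemma EV1: "E u v \<Longrightarrow> u \<in> V" using sg by (simp add: simple_graph_def)
lemma EV2: "E u v \<Longrightarrow> v \<in> V" using sg by (simp add: simple_graph_def)
lemma Esym: "E u v \<Longrightarrow> E v u" using sg by (simp add: simple_graph_def)
lemma Eirr: "\<not> E u u" using sg by (simp add: simple_graph_def)

lemma walk_sym: "(E ^^ n) u v \<Longrightarrow> (E ^^ n) v u"
proof (induction n arbitrary: v)
  case 0 then show ?case by simp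
next
  case (Suc n)
  from Suc.prems obtain t where "(E ^^ n) u t" "E t v" by (rule relpowp_Suc_E)
  then show ?case using Suc.IH Esym relpowp_Suc_I2 by metis
qed

lemma walk_V: "(E ^^ n) u v \<Longrightarrow> u \<in> V \<Longrightarrow> v \<in> V"
proof (induction n arbitrary: v)
  case 0 then show ?case by simp
next
  case (Suc n)
  from Suc.prems(1) obtain t where "(E ^^ n) u t" "E t v" by (rule relpowp_Suc_E)
  then show ?case using EV2 by blast
qed

lemma d_sym: "d u v = d v u"
  unfolding gdist_def using walk_sym by metis

lemma d_walk: "u \<in> V \<Longrightarrow> v \<in> V \<Longrightarrow> (E ^^ d u v) u v"
  unfolding gdist_def using cg unfolding connected_graph_def by (meson LeastI_ex)

lemma d_le: "(E ^^ n) u v \<Longrightarrow> d u v \<le> n"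
  unfolding gdist_def by (rule Least_le)

lemma d_refl[simp]: "d u u = 0"
  using d_le[of 0 u u] by simp

lemma d_0: "u \<in> V \<Longrightarrow> v \<in> V \<Longrightarrow> d u v = 0 \<Longrightarrow> u = v"
  using d_walk[of u v] by simp

lemma d_edge: "E u v \<Longrightarrow> d u v = 1"
proof -
  assume e: "E u v"
  have "d u v \<le> 1" using d_le[of 1 u v] e by (metis relpowp_1)
  moreover have "d u v \<noteq> 0" using d_0 e EV1 EV2 Eirr by metis
  ultimately show ?thesis by simp
qed

lemma d_tri: "u \<in> V \<Longrightarrow> v \<in> V \<Longrightarrow> w \<in> V \<Longrightarrow> d u w \<le> d u v + d v w"
  using d_walk[of u v] d_walk[of v w] relpowp_trans d_le by metis

lemma d_step: "E v w \<Longrightarrow> u \<in> V \<Longrightarrow> d u w \<le> d u v + 1"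
  using d_tri[of u v w] d_edge[of v w] EV1 EV2 by fastforce

lemma d_pred: "u \<in> V \<Longrightarrow> p \<in> V \<Longrightarrow> d u p = Suc n \<Longrightarrow> \<exists>t. E p t \<and> d u t = n"
proof -
  assume u: "u \<in> V" and p: "p \<in> V" and dp: "d u p = Suc n"
  from d_walk[OF u p] dp have "(E ^^ Suc n) u p" by simp
  then obtain t where w: "(E ^^ n) u t" and e: "E t p" by (rule relpowp_Suc_E)
  have "d u t \<le> n" using d_le[OF w] .
  moreover have "d u p \<le> d u t + 1" using d_step[OF e u] .
  ultimately have "d u t = n" using dp by simp
  then show ?thesis using e Esym by blast
qed

lemma d_two: "E v u \<Longrightarrow> E v w \<Longrightarrow> u \<noteq> w \<Longrightarrow> \<not> E u w \<Longrightarrow> d u w = 2"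
proof -
  assume a: "E v u" "E v w" "u \<noteq> w" "\<not> E u w"
  have "d u w \<le> d u v + d v w" using d_tri a EV1 EV2 by blast
  also have "\<dots> = 2" using d_edge a Esym by (simp add: d_sym)
  finally have "d u w \<le> 2" .
  moreover have "d u w \<noteq> 0" using d_0 a EV1 EV2 by metis
  moreover have "d u w \<noteq> 1"
  proof
    assume "d u w = 1"
    then have "(E ^^ 1) u w" using d_walk[of u w] a EV2 by metis
    then show False using a by (metis relpowp_1)
  qed
  ultimately show ?thesis by linarith
qed


abbreviation H where "H \<equiv> half V E"
abbreviation M where "M \<equiv> equi V E"

lemma H_iff: "v \<in> H x y \<longleftrightarrow> v \<in> V \<and> d v x < d v y" by (simp add: half_def)
lemma M_iff: "v \<in> M x y \<longleftrightarrow> v \<in> V \<and> d v x = d v y" by (simp add: equi_def)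

lemma trich: "v \<in> V \<Longrightarrow> v \<in> H x y \<or> v \<in> H y x \<or> v \<in> M x y"
  by (auto simp: H_iff M_iff)

lemma ex_refl: "E x y \<Longrightarrow> \<exists>\<phi>. reflection V E x y \<phi>"
  using rf EV1 EV2 unfolding reflective_def by blast

context
  fixes x y \<phi> assumes R: "reflection V E x y \<phi>" and xy: "E x y"
begin

lemma R_aut: "automorphism V E \<phi>" using R by (simp add: reflection_def)
lemma R_V: "u \<in> V \<Longrightarrow> \<phi> u \<in> V" using R_aut by (auto simp: automorphism_def bij_betw_def)
lemma R_inv: "u \<in> V \<Longrightarrow> \<phi> (\<phi> u) = u" using R by (simp add: reflection_def)
lemma R_adj: "u \<in> V \<Longrightarrow> v \<in> V \<Longrightarrow> E (\<phi> u) (\<phi> v) \<longleftrightarrow> E u v"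
  using R_aut by (simp add: automorphism_def)
lemma R_x: "\<phi> x = y" using R by (simp add: reflection_def)
lemma R_y: "\<phi> y = x" using R_inv R_x EV1 xy by metis
lemma R_fix: "v \<in> M x y \<Longrightarrow> \<phi> v = v" using R by (simp add: reflection_def)

lemma R_walk: "u \<in> V \<Longrightarrow> (E ^^ n) u v \<Longrightarrow> (E ^^ n) (\<phi> u) (\<phi> v)"
proof (induction n arbitrary: v)
  case 0 then show ?case by simp
next
  case (Suc n)
  from Suc.prems(2) obtain t where w: "(E ^^ n) u t" and e: "E t v" by (rule relpowp_Suc_E)
  have "E (\<phi> t) (\<phi> v)" using R_adj e EV1 EV2 by blast
  then show ?case using Suc.IH[OF Suc.prems(1) w] relpowp_Suc_I by metis
qed

lemma R_iso: "u \<in> V \<Longrightarrow> v \<in> V \<Longrightarrow> d (\<phi> u) (\<phi> v) = d u v"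
proof -
  assume u: "u \<in> V" and v: "v \<in> V"
  have iff: "(E ^^ n) (\<phi> u) (\<phi> v) \<longleftrightarrow> (E ^^ n) u v" for n
    using R_walk[OF u, of n v] R_walk[OF R_V[OF u], of n "\<phi> v"] R_inv u v by auto
  show ?thesis unfolding gdist_def iff ..
qed

lemma R_sets: "{{a, b} | a b. a \<in> H x y \<and> b \<in> H y x \<and> E a b} = {{a, \<phi> a} | a. a \<in> H x y}"
  using R by (simp add: reflection_def)

lemma R_cross: "a \<in> H x y \<Longrightarrow> E a (\<phi> a) \<and> \<phi> a \<in> H y x"
proof -
  assume a: "a \<in> H x y"
  have "{a, \<phi> a} \<in> {{a, \<phi> a} | a. a \<in> H x y}" using a by blast
  then have "{a, \<phi> a} \<in> {{a, b} | a b. a \<in> H x y \<and> b \<in> H y x \<and> E a b}" using R_sets by simp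
  then obtain a' b' where ab: "{a, \<phi> a} = {a', b'}" "a' \<in> H x y" "b' \<in> H y x" "E a' b'" by blast
  show ?thesis
  proof (cases "a = a'")
    case True
    then have "\<phi> a = b'" using ab(1) by (metis doubleton_eq_iff)
    then show ?thesis using ab True by simp
  next
    case False
    then have "a = b'" using ab(1) by (metis doubleton_eq_iff)
    then show ?thesis using a ab(3) by (simp add: H_iff)
  qed
qed

lemma R_match: "a \<in> H x y \<Longrightarrow> b \<in> H y x \<Longrightarrow> E a b \<Longrightarrow> b = \<phi> a"
proof -
  assume a: "a \<in> H x y" and b: "b \<in> H y x" and e: "E a b"
  have "{a, b} \<in> {{a, \<phi> a} | a. a \<in> H x y}" using R_sets a b e by blast
  then obtain a' where ab: "{a, b} = {a', \<phi> a'}" "a' \<in> H x y" by blast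
  show ?thesis
  proof (cases "a = a'")
    case True then show ?thesis using ab(1) by (metis doubleton_eq_iff)
  next
    case False
    then have "b = a'" using ab(1) by (metis doubleton_eq_iff)
    then show ?thesis using b ab(2) by (simp add: H_iff)
  qed
qed

lemma R_H: "v \<in> H y x \<Longrightarrow> \<phi> v \<in> H x y"
proof -
  assume v: "v \<in> H y x"
  have "d (\<phi> v) x = d v y" using R_iso[of v y] R_y v xy EV2 by (simp add: H_iff)
  moreover have "d (\<phi> v) y = d v x" using R_iso[of v x] R_x v xy EV1 by (simp add: H_iff)
  ultimately show ?thesis using v R_V by (simp add: H_iff)
qed

lemma R_H': "v \<in> H x y \<Longrightarrow> \<phi> v \<in> H y x"
  using R_cross by blast

definition F where "F p = (if p \<in> H y x then \<phi> p else p)"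

lemma F_V: "p \<in> V \<Longrightarrow> F p \<in> V" using R_V by (simp add: F_def)

lemma F_adj: "E q p \<Longrightarrow> F q = F p \<or> E (F q) (F p)"
proof -
  assume e: "E q p"
  have q: "q \<in> V" and p: "p \<in> V" using e EV1 EV2 by auto
  consider "q \<in> H y x" "p \<in> H y x" | "q \<in> H y x" "p \<in> H x y" | "q \<in> H y x" "p \<in> M x y"
    | "q \<notin> H y x" "p \<in> H y x" | "q \<notin> H y x" "p \<notin> H y x" using trich p by blast
  then show ?thesis
  proof cases
    case 1 then show ?thesis using R_adj q p e by (simp add: F_def)
  next
    case 2
    then have "q = \<phi> p" using R_match[of p q] e Esym by blast
    then show ?thesis using 2 R_inv p by (simp add: F_def H_iff)
  next
    case 3
    then have "p \<notin> H y x" by (simp add: H_iff M_iff)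
    then show ?thesis using 3 R_adj q p e R_fix by (simp add: F_def) (metis)
  next
    case 4
    show ?thesis
    proof (cases "q \<in> H x y")
      case True
      then have "p = \<phi> q" using R_match 4 e by blast
      then show ?thesis using 4 True R_inv q by (simp add: F_def H_iff)
    next
      case False
      then have "q \<in> M x y" using trich q 4 by blast
      then show ?thesis using 4 R_adj q p e R_fix by (simp add: F_def) (metis)
    qed
  next
    case 5 then show ?thesis using e by (simp add: F_def)
  qed
qed

lemma fold_gen: "w \<in> V \<Longrightarrow> w \<notin> H y x \<Longrightarrow> p \<in> V \<Longrightarrow> d w (F p) \<le> d w p"
proof (induction "d w p" arbitrary: p)
  case 0
  then have "p = w" using d_0 by metis
  then show ?case using 0 by (simp add: F_def)
next
  case (Suc n)
  obtain t where t: "E p t" "d w t = n" using d_pred[OF Suc.prems(1) Suc.prems(3) Suc.hyps(2)[symmetric]] by blast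
  have tV: "t \<in> V" using t EV2 by blast
  have "d w (F t) \<le> n" using Suc.hyps(1)[OF t(2)[symmetric] Suc.prems(1,2) tV] t by simp
  moreover have "d w (F p) \<le> d w (F t) + 1"
    using F_adj[of t p] t(1) Esym Suc.prems(1) d_step by fastforce
  ultimately show ?case using Suc.hyps(2) by simp
qed

lemma fold: "w \<in> V \<Longrightarrow> w \<notin> H y x \<Longrightarrow> u \<in> H x y \<Longrightarrow> d w u \<le> d w (\<phi> u)"
  using fold_gen[of w "\<phi> u"] R_H' R_inv by (simp add: F_def H_iff)


end

lemma wall_core_aux:
  assumes R: "reflection V E x y \<phi>" and xy: "E x y"
  shows "\<forall>v u. v \<in> H x y \<longrightarrow> u \<in> H x y \<longrightarrow> d v u = L \<longrightarrow> d v u < d v (\<phi> u)"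
proof (induction L rule: less_induct)
  note fold' = fold[OF R xy] and R_cross' = R_cross[OF R xy] and R_V' = R_V[OF R xy]
    and R_match' = R_match[OF R xy] and R_inv' = R_inv[OF R xy] and R_H' = R_H[OF R xy]
    and R_adj' = R_adj[OF R xy] and R_fix' = R_fix[OF R xy] and R_iso' = R_iso[OF R xy]
  case (less L)
  show ?case
  proof (intro allI impI)
    fix v u assume v: "v \<in> H x y" and u: "u \<in> H x y" and L: "d v u = L"
    have vV: "v \<in> V" and uV: "u \<in> V" using v u by (auto simp: H_iff)
    have vn: "v \<notin> H y x" using v by (auto simp: H_iff)
    have fu: "\<phi> u \<in> H y x" "E u (\<phi> u)" using R_cross' u by auto
    have fuV: "\<phi> u \<in> V" using R_V' uV by blast
    show "d v u < d v (\<phi> u)"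
    proof (rule ccontr)
      assume "\<not> d v u < d v (\<phi> u)"
      then have eq: "d v (\<phi> u) = L" using fold'[OF vV vn u] L by simp
      show False
      proof (cases L)
        case 0
        then have "v = u" using d_0 vV uV L by metis
        then show False using eq 0 d_edge[OF fu(2)] by simp
      next
        case (Suc n)
        obtain t where t: "E (\<phi> u) t" "d v t = n" using d_pred[OF vV fuV] eq Suc by blast
        have tV: "t \<in> V" using t EV2 by blast
        consider "t \<in> H x y" | "t \<in> H y x" | "t \<in> M x y" using trich tV by blast
        then show False
        proof cases
          case 1
          then have "\<phi> u = \<phi> t" using R_match'[of t "\<phi> u"] fu t Esym by blast
          then have "u = t" using R_inv' uV tV by metis
          then show False using L t Suc by simp
        next
          case 2
          define s where "s = \<phi> t"
          have s: "s \<in> H x y" using R_H' 2 s_def by blast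
          have sV: "s \<in> V" using s by (simp add: H_iff)
          have ts: "t = \<phi> s" using R_inv' tV s_def by simp
          have us: "E u s" using t(1) ts R_adj' uV sV by simp
          have "d v s \<le> n" using fold'[OF vV vn s] t ts by simp
          then have "d v s < d v (\<phi> s)" using less.IH[of "d v s"] Suc v s by simp
          then have "d v s + 1 \<le> n" using t ts by simp
          moreover have "d v u \<le> d v s + 1" using d_step[of s u v] us Esym vV by simp
          ultimately show False using L Suc by simp
        next
          case 3
          have ft: "\<phi> t = t" using R_fix' 3 by blast
          have ut: "E u t" using t(1) R_adj'[of u t] uV tV ft by simp
          obtain \<sigma> where S: "reflection V E t (\<phi> u) \<sigma>" using ex_refl[of t "\<phi> u"] t(1) Esym by blast
          have etu: "E t (\<phi> u)" using t(1) Esym by blast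
          have vS: "v \<in> H t (\<phi> u)" using vV t eq Suc by (simp add: H_iff)
          have sv: "E v (\<sigma> v)" using R_cross[OF S etu vS] by blast
          have svV: "\<sigma> v \<in> V" using sv EV2 by blast
          have uM: "u \<in> M t (\<phi> u)" using uV d_edge[OF ut] d_edge[OF fu(2)] by (simp add: M_iff d_sym)
          have su: "\<sigma> u = u" using R_fix[OF S etu uM] .
          have st: "\<sigma> t = \<phi> u" using R_x[OF S etu] .
          have d1: "d (\<sigma> v) u = L" using R_iso[OF S etu vV uV] su L by simp
          have d2: "d (\<sigma> v) (\<phi> u) = n" using R_iso[OF S etu vV tV] st t by simp
          consider "\<sigma> v \<in> H x y" | "\<sigma> v \<in> M x y" | "\<sigma> v \<in> H y x" using trich svV by blast
          then show False
          proof cases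
            case 1
            then have "\<sigma> v \<notin> H y x" by (auto simp: H_iff)
            then show False using fold'[OF svV _ u] d1 d2 Suc by simp
          next
            case 2
            have "d (\<phi> (\<sigma> v)) (\<phi> u) = d (\<sigma> v) u" using R_iso' svV uV by blast
            then show False using R_fix'[OF 2] d1 d2 Suc by simp
          next
            case 3
            then have "\<sigma> v = \<phi> v" using R_match'[OF v 3 sv] by simp
            then show False using R_iso'[OF vV uV] d2 L Suc by simp
          qed
        qed
      qed
    qed
  qed
qed

lemma wall_core: "reflection V E x y \<phi> \<Longrightarrow> E x y \<Longrightarrow> v \<in> H x y \<Longrightarrow> u \<in> H x y \<Longrightarrow> d v u < d v (\<phi> u)"
  using wall_core_aux by blast

definition sig where "sig a b v = int (d v a) - int (d v b)"

lemma edge_lip: "E a b \<Longrightarrow> v \<in> V \<Longrightarrow> d v b \<le> d v a + 1 \<and> d v a \<le> d v b + 1"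
  using d_step Esym by blast

lemma wall:
  assumes R: "reflection V E x y \<phi>" and xy: "E x y" and u: "u \<in> H x y" and v: "v \<in> V"
  shows "sig u (\<phi> u) v = sig x y v"
proof -
  have uV: "u \<in> V" using u by (simp add: H_iff)
  have eu: "E u (\<phi> u)" using R_cross[OF R xy u] by blast
  have fuV: "\<phi> u \<in> V" using eu EV2 by blast
  consider "v \<in> H x y" | "v \<in> H y x" | "v \<in> M x y" using trich v by blast
  then show ?thesis
  proof cases
    case 1
    have "d v u < d v (\<phi> u)" using wall_core[OF R xy 1 u] .
    moreover have "d v x < d v y" using 1 by (simp add: H_iff)
    ultimately show ?thesis using edge_lip[OF eu v] edge_lip[OF xy v] by (simp add: sig_def)
  next
    case 2
    have fv: "\<phi> v \<in> H x y" using R_H[OF R xy 2] .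
    have "d (\<phi> v) u < d (\<phi> v) (\<phi> u)" using wall_core[OF R xy fv u] .
    moreover have "d (\<phi> v) u = d v (\<phi> u)" using R_iso[OF R xy v fuV] R_inv[OF R xy uV] by simp
    moreover have "d (\<phi> v) (\<phi> u) = d v u" using R_iso[OF R xy v uV] .
    moreover have "d v y < d v x" using 2 by (simp add: H_iff)
    ultimately show ?thesis using edge_lip[OF eu v] edge_lip[OF xy v] by (simp add: sig_def)
  next
    case 3
    have "d (\<phi> v) (\<phi> u) = d v u" using R_iso[OF R xy v uV] .
    then have "d v (\<phi> u) = d v u" using R_fix[OF R xy 3] by simp
    moreover have "d v x = d v y" using 3 by (simp add: M_iff)
    ultimately show ?thesis by (simp add: sig_def)
  qed
qed


definition theta where "theta p q a b \<longleftrightarrow> sig a b p \<noteq> sig a b q"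

lemma theta_sym: "theta p q a b \<longleftrightarrow> theta a b p q"
  unfolding theta_def sig_def using d_sym[of p a] d_sym[of p b] d_sym[of q a] d_sym[of q b] by auto

lemma theta_swap2: "theta p q a b \<longleftrightarrow> theta p q b a"
  unfolding theta_def sig_def by auto

lemma theta_swap1: "theta p q a b \<longleftrightarrow> theta q p a b"
  unfolding theta_def by auto

lemma sig_H: "E a b \<Longrightarrow> v \<in> H a b \<Longrightarrow> sig a b v = -1"
  using edge_lip[of a b v] by (auto simp: sig_def H_iff)

lemma sig_H': "E a b \<Longrightarrow> v \<in> H b a \<Longrightarrow> sig a b v = 1"
  using edge_lip[of a b v] by (auto simp: sig_def H_iff)

lemma sig_M: "v \<in> M a b \<Longrightarrow> sig a b v = 0"
  by (auto simp: sig_def M_iff)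

lemma theta_wall:
  assumes R: "reflection V E a b \<psi>" and ab: "E a b" and u: "u \<in> H a b" and p: "p \<in> V" and q: "q \<in> V"
  shows "theta p q a b \<longleftrightarrow> theta p q u (\<psi> u)"
  unfolding theta_def using wall[OF R ab u p] wall[OF R ab u q] by simp

context
  fixes z C
  assumes zV: "z \<in> V" and CS: "\<And>c. c \<in> C \<Longrightarrow> E z c"
    and Ccl: "\<And>c k. c \<in> C \<Longrightarrow> E z k \<Longrightarrow> E c k \<Longrightarrow> k \<in> C"
begin

lemma T1:
  assumes ab: "E a b" and zH: "z \<in> H a b" and pq: "E p q" and th: "theta p q a b"
    and c: "c \<in> C" and thc: "theta z c a b"
  shows "\<exists>c'\<in>C. theta p q z c'"
proof -
  obtain \<psi> where R: "reflection V E a b \<psi>" using ex_refl ab by blast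
  define k where "k = \<psi> z"
  have zk: "E z k" using R_cross[OF R ab zH] k_def by blast
  have cV: "c \<in> V" using CS c EV2 by blast
  have pV: "p \<in> V" and qV: "q \<in> V" using pq EV1 EV2 by auto
  have "theta z c z k" using theta_wall[OF R ab zH zV cV] thc k_def by simp
  then have "sig z k z \<noteq> sig z k c" by (simp add: theta_def)
  moreover have "sig z k z = -1" using d_edge[OF zk] by (simp add: sig_def d_sym)
  moreover have "sig z k c = 1 - int (d c k)" using d_edge[OF CS[OF c]] by (simp add: sig_def d_sym)
  ultimately have "d c k \<noteq> 2" by simp
  then have "c = k \<or> E c k" using d_two[of z c k] CS[OF c] zk by blast
  then have kC: "k \<in> C" using Ccl[OF c zk] c by blast
  have "theta p q z k" using theta_wall[OF R ab zH pV qV] th k_def by simp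
  then show ?thesis using kC by blast
qed

lemma T2:
  assumes ab: "E a b" and zM: "z \<in> M a b" and pq: "E p q" and th: "theta p q a b"
    and c: "c \<in> C" and cH: "c \<in> H a b"
  shows "\<exists>c'\<in>C. theta p q z c'"
proof -
  obtain \<psi> where R: "reflection V E a b \<psi>" using ex_refl ab by blast
  define c' where "c' = \<psi> c"
  have cc: "E c c'" using R_cross[OF R ab cH] c'_def by blast
  have cV: "c \<in> V" using CS c EV2 by blast
  have zc': "E z c'" using R_adj[OF R ab zV cV] R_fix[OF R ab zM] CS[OF c] c'_def by simp
  have c'C: "c' \<in> C" using Ccl[OF c zc' cc] .
  have c'V: "c' \<in> V" using cc EV2 by blast
  have pV: "p \<in> V" and qV: "q \<in> V" using pq EV1 EV2 by auto
  have "theta p q c c'" using theta_wall[OF R ab cH pV qV] th c'_def by simp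
  then have "sig p q c \<noteq> sig p q c'" using theta_sym by (simp add: theta_def)
  then have "sig p q z \<noteq> sig p q c \<or> sig p q z \<noteq> sig p q c'" by auto
  then have "theta z c p q \<or> theta z c' p q" by (auto simp: theta_def)
  then show ?thesis using theta_sym c c'C by blast
qed

lemma T:
  assumes pq: "E p q" and ab: "E a b" and th: "theta p q a b" and c: "c \<in> C" and thc: "theta a b z c"
  shows "\<exists>c'\<in>C. theta p q z c'"
proof -
  have cV: "c \<in> V" using CS c EV2 by blast
  have thc': "theta z c a b" using thc theta_sym by blast
  then have ne: "sig a b z \<noteq> sig a b c" by (simp add: theta_def)
  consider "z \<in> H a b" | "z \<in> H b a" | "z \<in> M a b" using trich zV by blast
  then show ?thesis
  proof cases
    case 1 show ?thesis using T1[OF ab 1 pq th c thc'] by blast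
  next
    case 2 then show ?thesis using T1[OF Esym[OF ab] 2 pq _ c] th thc' theta_swap2 by blast
  next
    case 3
    then have "sig a b c \<noteq> 0" using ne sig_M by simp
    then have "c \<in> H a b \<or> c \<in> H b a" using trich[OF cV, of a b] sig_M by blast
    moreover have "z \<in> M b a" using 3 by (auto simp: M_iff)
    ultimately show ?thesis using T2[OF ab 3 pq th c] T2[OF Esym[OF ab] _ pq _ c] th theta_swap2 by blast
  qed
qed

definition P1 where "P1 a b \<longleftrightarrow> E a b \<and> (\<exists>c\<in>C. theta a b z c)"
definition P2 where "P2 a b \<longleftrightarrow> E a b \<and> \<not> (\<exists>c\<in>C. theta a b z c)"

lemma P1_cl: "E p q \<Longrightarrow> P1 a b \<Longrightarrow> theta p q a b \<Longrightarrow> P1 p q"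
  unfolding P1_def using T by blast

lemma P2_cl: "E p q \<Longrightarrow> P2 a b \<Longrightarrow> theta p q a b \<Longrightarrow> P2 p q"
  unfolding P2_def using T theta_sym by blast

lemma P1_sym: "P1 a b \<Longrightarrow> P1 b a"
  unfolding P1_def using Esym theta_swap1 by blast
lemma P2_sym: "P2 a b \<Longrightarrow> P2 b a"
  unfolding P2_def using Esym theta_swap1 by blast

end

end

context rg begin

lemma square_gen:
  assumes cl2: "\<And>p q a b. E p q \<Longrightarrow> X2 a b \<Longrightarrow> theta p q a b \<Longrightarrow> X2 p q"
    and cl1: "\<And>p q a b. E p q \<Longrightarrow> X1 a b \<Longrightarrow> theta p q a b \<Longrightarrow> X1 p q"
    and disj: "\<And>a b. \<not> (X1 a b \<and> X2 a b)"
    and QE1: "\<And>a b. X1 a b \<Longrightarrow> E a b" and QE2: "\<And>a b. X2 a b \<Longrightarrow> E a b"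
    and vu: "X1 v u" and vw: "X2 v w"
  shows "\<exists>x. X2 u x \<and> X1 x w"
proof -
  have evu: "E v u" and evw: "E v w" using QE1[OF vu] QE2[OF vw] .
  have vV: "v \<in> V" and uV: "u \<in> V" and wV: "w \<in> V" using evu evw EV1 EV2 by auto
  have uw: "u \<noteq> w" using disj vu vw by blast
  have nuw: "\<not> E u w"
  proof
    assume euw: "E u w"
    have "sig v w v = -1" using d_edge[OF evw] by (simp add: sig_def)
    moreover have "sig v w u = 0" using d_edge[OF evu] d_edge[OF euw] by (simp add: sig_def d_sym)
    ultimately have "theta v u v w" by (simp add: theta_def)
    then have "X2 v u" using cl2[OF evu vw] by blast
    then show False using disj vu by blast
  qed
  have duw: "d u w = 2" using d_two[OF evu evw uw nuw] .
  obtain \<psi> where R: "reflection V E v w \<psi>" using ex_refl evw by blast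
  have uH: "u \<in> H v w" using uV duw d_edge[OF evu] by (simp add: H_iff d_sym)
  define x where "x = \<psi> u"
  have ux: "E u x" and xH: "x \<in> H w v" using R_cross[OF R evw uH] x_def by auto
  have xV: "x \<in> V" using ux EV2 by blast
  have wx: "E w x" using R_adj[OF R evw vV uV] evu R_x[OF R evw] x_def by simp
  have "sig v w u = -1" using sig_H[OF evw uH] .
  moreover have "sig v w x = 1" using sig_H'[OF evw xH] .
  ultimately have "theta u x v w" by (simp add: theta_def)
  then have q2: "X2 u x" using cl2[OF ux vw] by blast
  have dxv: "d x v = 2" using R_iso[OF R evw uV wV] R_y[OF R evw] duw x_def by simp
  have "sig v u x = 1" using dxv d_edge[OF ux] by (simp add: sig_def d_sym)
  moreover have "sig v u w = -1" using d_edge[OF evw] duw by (simp add: sig_def d_sym)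
  ultimately have "theta x w v u" by (simp add: theta_def)
  then have "X1 x w" using cl1[OF Esym[OF wx] vu] by blast
  then show ?thesis using q2 by blast
qed

end

locale rgp = rg V E for V :: "'a set" and E +
  fixes Q1 Q2 :: "'a \<Rightarrow> 'a \<Rightarrow> bool" and z :: 'a
  assumes QE1: "Q1 a b \<Longrightarrow> E a b" and QE2: "Q2 a b \<Longrightarrow> E a b"
    and cover: "E a b \<Longrightarrow> Q1 a b \<or> Q2 a b"
    and disj: "\<not> (Q1 a b \<and> Q2 a b)"
    and cl1: "E p q \<Longrightarrow> Q1 a b \<Longrightarrow> theta p q a b \<Longrightarrow> Q1 p q"
    and cl2: "E p q \<Longrightarrow> Q2 a b \<Longrightarrow> theta p q a b \<Longrightarrow> Q2 p q"
    and sym1: "Q1 a b \<Longrightarrow> Q1 b a" and sym2: "Q2 a b \<Longrightarrow> Q2 b a"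
    and zV: "z \<in> V"
begin

lemma sq12: "Q1 v u \<Longrightarrow> Q2 v w \<Longrightarrow> \<exists>x. Q2 u x \<and> Q1 x w"
  using square_gen[of Q2 Q1] cl1 cl2 disj QE1 QE2 by blast

lemma sq21: "Q2 v u \<Longrightarrow> Q1 v w \<Longrightarrow> \<exists>x. Q1 u x \<and> Q2 x w"
  using square_gen[of Q1 Q2] cl1 cl2 disj QE1 QE2 by blast

lemma sep2: "Q2\<^sup>*\<^sup>* x y \<Longrightarrow> Q1 p q \<Longrightarrow> sig p q x = sig p q y"
proof (induction rule: rtranclp_induct)
  case base then show ?case by simp
next
  case (step y' y)
  have "\<not> theta y' y p q" using cl1[OF QE2[OF step(2)] step(4)] disj step(2) by blast
  then show ?case using step by (simp add: theta_def theta_sym[of y' y p q])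
qed

lemma sep1: "Q1\<^sup>*\<^sup>* x y \<Longrightarrow> Q2 p q \<Longrightarrow> sig p q x = sig p q y"
proof (induction rule: rtranclp_induct)
  case base then show ?case by simp
next
  case (step y' y)
  have "\<not> theta y' y p q" using cl2[OF QE1[OF step(2)] step(4)] disj step(2) by blast
  then show ?case using step by (simp add: theta_def theta_sym[of y' y p q])
qed

lemma star_V: "Q\<^sup>*\<^sup>* x y \<Longrightarrow> (\<And>a b. Q a b \<Longrightarrow> E a b) \<Longrightarrow> x \<in> V \<Longrightarrow> y \<in> V"
  by (induction rule: rtranclp_induct) (auto dest: EV2)

lemma star_sym: "Q\<^sup>*\<^sup>* x y \<Longrightarrow> (\<And>a b. Q a b \<Longrightarrow> Q b a) \<Longrightarrow> Q\<^sup>*\<^sup>* y x"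
  by (induction rule: rtranclp_induct) (auto intro: converse_rtranclp_into_rtranclp)

lemma uniq: "x \<in> V \<Longrightarrow> Q1\<^sup>*\<^sup>* x y \<Longrightarrow> Q2\<^sup>*\<^sup>* x y \<Longrightarrow> x = y"
proof (rule ccontr)
  assume xV: "x \<in> V" and r1: "Q1\<^sup>*\<^sup>* x y" and r2: "Q2\<^sup>*\<^sup>* x y" and ne: "x \<noteq> y"
  have yV: "y \<in> V" using star_V[OF r1 QE1 xV] .
  have "d y x \<noteq> 0" using d_0 xV yV ne by metis
  then obtain n where "d y x = Suc n" using not0_implies_Suc by blast
  then obtain x' where xx: "E x x'" and dx: "d y x' = n" using d_pred[OF yV xV] by blast
  have s1: "sig x x' x = -1" using d_edge[OF xx] by (simp add: sig_def)
  have s2: "sig x x' y = 1" using dx \<open>d y x = Suc n\<close> by (simp add: sig_def)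
  show False
  proof (cases "Q1 x x'")
    case True then show False using sep2[OF r2 True] s1 s2 by simp
  next
    case False
    then have "Q2 x x'" using cover xx by blast
    then show False using sep1[OF r1] s1 s2 by simp
  qed
qed

lemma comm21: "Q2\<^sup>*\<^sup>* u v \<Longrightarrow> Q1 v w \<Longrightarrow> \<exists>x. Q1 u x \<and> Q2\<^sup>*\<^sup>* x w"
proof (induction arbitrary: w rule: converse_rtranclp_induct)
  case base then show ?case by blast
next
  case (step u u')
  obtain x' where "Q1 u' x'" "Q2\<^sup>*\<^sup>* x' w" using step.IH step.prems by blast
  moreover obtain x where "Q1 u x" "Q2 x x'" using sq21[OF sym2[OF step.hyps(1)] \<open>Q1 u' x'\<close>] by blast
  ultimately show ?case by (meson converse_rtranclp_into_rtranclp)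
qed

lemma comm12: "Q1\<^sup>*\<^sup>* u v \<Longrightarrow> Q2 v w \<Longrightarrow> \<exists>x. Q2 u x \<and> Q1\<^sup>*\<^sup>* x w"
proof (induction arbitrary: w rule: converse_rtranclp_induct)
  case base then show ?case by blast
next
  case (step u u')
  obtain x' where "Q2 u' x'" "Q1\<^sup>*\<^sup>* x' w" using step.IH step.prems by blast
  moreover obtain x where "Q2 u x" "Q1 x x'" using sq12[OF sym1[OF step.hyps(1)] \<open>Q2 u' x'\<close>] by blast
  ultimately show ?case by (meson converse_rtranclp_into_rtranclp)
qed

lemma comm21s: "Q1\<^sup>*\<^sup>* v w \<Longrightarrow> Q2\<^sup>*\<^sup>* u v \<Longrightarrow> \<exists>x. Q1\<^sup>*\<^sup>* u x \<and> Q2\<^sup>*\<^sup>* x w"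
proof (induction rule: rtranclp_induct)
  case base then show ?case by blast
next
  case (step w' w)
  obtain x' where "Q1\<^sup>*\<^sup>* u x'" "Q2\<^sup>*\<^sup>* x' w'" using step by blast
  moreover obtain x where "Q1 x' x" "Q2\<^sup>*\<^sup>* x w" using comm21[OF \<open>Q2\<^sup>*\<^sup>* x' w'\<close> step(2)] by blast
  ultimately show ?case by (meson rtranclp.rtrancl_into_rtrancl)
qed

lemma comm12s: "Q2\<^sup>*\<^sup>* v w \<Longrightarrow> Q1\<^sup>*\<^sup>* u v \<Longrightarrow> \<exists>x. Q2\<^sup>*\<^sup>* u x \<and> Q1\<^sup>*\<^sup>* x w"
proof (induction rule: rtranclp_induct)
  case base then show ?case by blast
next
  case (step w' w)
  obtain x' where "Q2\<^sup>*\<^sup>* u x'" "Q1\<^sup>*\<^sup>* x' w'" using step by blast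
  moreover obtain x where "Q2 x' x" "Q1\<^sup>*\<^sup>* x w" using comm12[OF \<open>Q1\<^sup>*\<^sup>* x' w'\<close> step(2)] by blast
  ultimately show ?case by (meson rtranclp.rtrancl_into_rtrancl)
qed

lemma reachE: "v \<in> V \<Longrightarrow> E\<^sup>*\<^sup>* z v"
  using cg zV unfolding connected_graph_def by (meson relpowp_imp_rtranclp)

lemma reach12: "E\<^sup>*\<^sup>* u v \<Longrightarrow> \<exists>a. Q1\<^sup>*\<^sup>* u a \<and> Q2\<^sup>*\<^sup>* a v"
proof (induction rule: rtranclp_induct)
  case base then show ?case by blast
next
  case (step v' v)
  then obtain a where a: "Q1\<^sup>*\<^sup>* u a" "Q2\<^sup>*\<^sup>* a v'" by blast
  show ?case
  proof (cases "Q1 v' v")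
    case True
    then obtain x where "Q1 a x" "Q2\<^sup>*\<^sup>* x v" using comm21[OF a(2)] by blast
    then show ?thesis using a(1) by (meson rtranclp.rtrancl_into_rtrancl)
  next
    case False
    then have "Q2 v' v" using cover step(2) by blast
    then show ?thesis using a by (meson rtranclp.rtrancl_into_rtrancl)
  qed
qed


lemma reach21: "E\<^sup>*\<^sup>* u v \<Longrightarrow> \<exists>b. Q2\<^sup>*\<^sup>* u b \<and> Q1\<^sup>*\<^sup>* b v"
proof (induction rule: rtranclp_induct)
  case base then show ?case by blast
next
  case (step v' v)
  then obtain a where a: "Q2\<^sup>*\<^sup>* u a" "Q1\<^sup>*\<^sup>* a v'" by blast
  show ?case
  proof (cases "Q2 v' v")
    case True
    then obtain x where "Q2 a x" "Q1\<^sup>*\<^sup>* x v" using comm12[OF a(2)] by blast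
    then show ?thesis using a(1) by (meson rtranclp.rtrancl_into_rtrancl)
  next
    case False
    then have "Q1 v' v" using cover step(2) by blast
    then show ?thesis using a by (meson rtranclp.rtrancl_into_rtrancl)
  qed
qed

definition "AA = {a. Q1\<^sup>*\<^sup>* z a}"
definition "BB = {b. Q2\<^sup>*\<^sup>* z b}"
definition "pA v = (THE a. Q1\<^sup>*\<^sup>* z a \<and> Q2\<^sup>*\<^sup>* a v)"
definition "pB v = (THE b. Q2\<^sup>*\<^sup>* z b \<and> Q1\<^sup>*\<^sup>* b v)"

lemma s1: "Q1\<^sup>*\<^sup>* x y \<Longrightarrow> Q1\<^sup>*\<^sup>* y x" using star_sym[of Q1 x y] sym1 by blast
lemma s2: "Q2\<^sup>*\<^sup>* x y \<Longrightarrow> Q2\<^sup>*\<^sup>* y x" using star_sym[of Q2 x y] sym2 by blast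
lemma V1: "Q1\<^sup>*\<^sup>* z x \<Longrightarrow> x \<in> V" using star_V[of Q1 z x] QE1 zV by blast
lemma V2: "Q2\<^sup>*\<^sup>* z x \<Longrightarrow> x \<in> V" using star_V[of Q2 z x] QE2 zV by blast

lemma pA_uniq: "Q1\<^sup>*\<^sup>* z a \<Longrightarrow> Q2\<^sup>*\<^sup>* a v \<Longrightarrow> Q1\<^sup>*\<^sup>* z a' \<Longrightarrow> Q2\<^sup>*\<^sup>* a' v \<Longrightarrow> a = a'"
proof -
  assume h: "Q1\<^sup>*\<^sup>* z a" "Q2\<^sup>*\<^sup>* a v" "Q1\<^sup>*\<^sup>* z a'" "Q2\<^sup>*\<^sup>* a' v"
  have "Q1\<^sup>*\<^sup>* a a'" using rtranclp_trans[OF s1[OF h(1)] h(3)] .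
  moreover have "Q2\<^sup>*\<^sup>* a a'" using rtranclp_trans[OF h(2) s2[OF h(4)]] .
  ultimately show ?thesis using uniq V1 h(1) by blast
qed

lemma pB_uniq: "Q2\<^sup>*\<^sup>* z a \<Longrightarrow> Q1\<^sup>*\<^sup>* a v \<Longrightarrow> Q2\<^sup>*\<^sup>* z a' \<Longrightarrow> Q1\<^sup>*\<^sup>* a' v \<Longrightarrow> a = a'"
proof -
  assume h: "Q2\<^sup>*\<^sup>* z a" "Q1\<^sup>*\<^sup>* a v" "Q2\<^sup>*\<^sup>* z a'" "Q1\<^sup>*\<^sup>* a' v"
  have "Q1\<^sup>*\<^sup>* a a'" using rtranclp_trans[OF h(2) s1[OF h(4)]] .
  moreover have "Q2\<^sup>*\<^sup>* a a'" using rtranclp_trans[OF s2[OF h(1)] h(3)] .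
  ultimately show ?thesis using uniq V2 h(1) by blast
qed

lemma pA: "v \<in> V \<Longrightarrow> Q1\<^sup>*\<^sup>* z (pA v) \<and> Q2\<^sup>*\<^sup>* (pA v) v"
proof -
  assume v: "v \<in> V"
  obtain a where a: "Q1\<^sup>*\<^sup>* z a" "Q2\<^sup>*\<^sup>* a v" using reach12[OF reachE[OF v]] by blast
  have "pA v = a" unfolding pA_def
  proof (rule the_equality)
    fix a' assume "Q1\<^sup>*\<^sup>* z a' \<and> Q2\<^sup>*\<^sup>* a' v"
    then show "a' = a" using pA_uniq[of a' v a] a by blast
  qed (use a in blast)
  then show ?thesis using a by simp
qed

lemma pB: "v \<in> V \<Longrightarrow> Q2\<^sup>*\<^sup>* z (pB v) \<and> Q1\<^sup>*\<^sup>* (pB v) v"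
proof -
  assume v: "v \<in> V"
  obtain a where a: "Q2\<^sup>*\<^sup>* z a" "Q1\<^sup>*\<^sup>* a v" using reach21[OF reachE[OF v]] by blast
  have "pB v = a" unfolding pB_def
  proof (rule the_equality)
    fix a' assume "Q2\<^sup>*\<^sup>* z a' \<and> Q1\<^sup>*\<^sup>* a' v"
    then show "a' = a" using pB_uniq[of a' v a] a by blast
  qed (use a in blast)
  then show ?thesis using a by simp
qed

lemma pA_eq: "v \<in> V \<Longrightarrow> Q1\<^sup>*\<^sup>* z a \<Longrightarrow> Q2\<^sup>*\<^sup>* a v \<Longrightarrow> pA v = a"
  using pA pA_uniq by blast
lemma pB_eq: "v \<in> V \<Longrightarrow> Q2\<^sup>*\<^sup>* z a \<Longrightarrow> Q1\<^sup>*\<^sup>* a v \<Longrightarrow> pB v = a"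
  using pB pB_uniq by blast

definition "ff v = (pA v, pB v)"
definition "EA a a' \<longleftrightarrow> E a a' \<and> a \<in> AA \<and> a' \<in> AA"
definition "EB a a' \<longleftrightarrow> E a a' \<and> a \<in> BB \<and> a' \<in> BB"

lemma AA_V: "AA \<subseteq> V" using V1 by (auto simp: AA_def)
lemma BB_V: "BB \<subseteq> V" using V2 by (auto simp: BB_def)

lemma sgA: "simple_graph AA EA"
proof -
  have "finite AA" using AA_V finV finite_subset by blast
  then show ?thesis using Esym Eirr unfolding simple_graph_def EA_def by blast
qed
lemma sgB: "simple_graph BB EB"
proof -
  have "finite BB" using BB_V finV finite_subset by blast
  then show ?thesis using Esym Eirr unfolding simple_graph_def EB_def by blast
qed

lemma bij: "bij_betw ff V (AA \<times> BB)"
  unfolding bij_betw_def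
proof
  show "inj_on ff V"
  proof (rule inj_onI)
    fix u v assume u: "u \<in> V" and v: "v \<in> V" and e: "ff u = ff v"
    have ea: "pA u = pA v" and eb: "pB u = pB v" using e by (auto simp: ff_def)
    have "Q2\<^sup>*\<^sup>* u (pA v)" using s2[OF conjunct2[OF pA[OF u]]] ea by simp
    then have "Q2\<^sup>*\<^sup>* u v" using conjunct2[OF pA[OF v]] by (rule rtranclp_trans)
    moreover have "Q1\<^sup>*\<^sup>* u (pB v)" using s1[OF conjunct2[OF pB[OF u]]] eb by simp
    then have "Q1\<^sup>*\<^sup>* u v" using conjunct2[OF pB[OF v]] by (rule rtranclp_trans)
    ultimately show "u = v" using uniq u by blast
  qed
  show "ff ` V = AA \<times> BB"
  proof
    show "ff ` V \<subseteq> AA \<times> BB" using pA pB by (auto simp: ff_def AA_def BB_def)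
    show "AA \<times> BB \<subseteq> ff ` V"
    proof
      fix p assume "p \<in> AA \<times> BB"
      then obtain a b where p: "p = (a, b)" and a: "Q1\<^sup>*\<^sup>* z a" and b: "Q2\<^sup>*\<^sup>* z b"
        by (auto simp: AA_def BB_def)
      obtain x where x: "Q2\<^sup>*\<^sup>* a x" "Q1\<^sup>*\<^sup>* x b" using comm12s[OF b s1[OF a]] by blast
      have xV: "x \<in> V" using star_V[OF x(1) QE2] V1[OF a] by blast
      have "pA x = a" using pA_eq[OF xV a x(1)] .
      moreover have "pB x = b" using pB_eq[OF xV b s1[OF x(2)]] .
      ultimately show "p \<in> ff ` V" using p xV by (auto simp: ff_def)
    qed
  qed
qed

lemma adj1: "u \<in> V \<Longrightarrow> v \<in> V \<Longrightarrow> Q1 u v \<Longrightarrow> EA (pA u) (pA v) \<and> pB u = pB v"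
proof -
  assume u: "u \<in> V" and v: "v \<in> V" and q: "Q1 u v"
  have "pB v = pB u" using pB_eq[OF v] pB[OF u] q by (meson rtranclp.rtrancl_into_rtrancl)
  moreover obtain x where x: "Q1 (pA u) x" "Q2\<^sup>*\<^sup>* x v" using comm21[OF conjunct2[OF pA[OF u]] q] by blast
  moreover have xA: "Q1\<^sup>*\<^sup>* z x" using pA[OF u] x(1) by (meson rtranclp.rtrancl_into_rtrancl)
  ultimately have "pA v = x" using pA_eq[OF v] by blast
  then show ?thesis using x xA pA[OF u] QE1 \<open>pB v = pB u\<close> by (auto simp: EA_def AA_def)
qed

lemma adj2: "u \<in> V \<Longrightarrow> v \<in> V \<Longrightarrow> Q2 u v \<Longrightarrow> EB (pB u) (pB v) \<and> pA u = pA v"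
proof -
  assume u: "u \<in> V" and v: "v \<in> V" and q: "Q2 u v"
  have "pA v = pA u" using pA_eq[OF v] pA[OF u] q by (meson rtranclp.rtrancl_into_rtrancl)
  moreover obtain x where x: "Q2 (pB u) x" "Q1\<^sup>*\<^sup>* x v" using comm12[OF conjunct2[OF pB[OF u]] q] by blast
  moreover have xA: "Q2\<^sup>*\<^sup>* z x" using pB[OF u] x(1) by (meson rtranclp.rtrancl_into_rtrancl)
  ultimately have "pB v = x" using pB_eq[OF v] by blast
  then show ?thesis using x xA pB[OF u] QE2 \<open>pA v = pA u\<close> by (auto simp: EB_def BB_def)
qed

lemma back1: "u \<in> V \<Longrightarrow> v \<in> V \<Longrightarrow> EA (pA u) (pA v) \<Longrightarrow> pB u = pB v \<Longrightarrow> E u v"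
proof -
  assume u: "u \<in> V" and v: "v \<in> V" and e: "EA (pA u) (pA v)" and b: "pB u = pB v"
  have q: "Q1 (pA u) (pA v)"
  proof (rule ccontr)
    assume "\<not> Q1 (pA u) (pA v)"
    then have "Q2 (pA u) (pA v)" using cover e by (auto simp: EA_def)
    moreover have "Q1\<^sup>*\<^sup>* (pA u) (pA v)" using e s1 by (auto simp: EA_def AA_def intro: rtranclp_trans)
    moreover have "pA u \<in> V" using e EV1 by (auto simp: EA_def)
    ultimately have "pA u = pA v" using uniq by blast
    then show False using e Eirr by (auto simp: EA_def)
  qed
  obtain x where x: "Q1 u x" "Q2\<^sup>*\<^sup>* x (pA v)" using comm21[OF s2[OF conjunct2[OF pA[OF u]]] q] by blast
  have xV: "x \<in> V" using QE1 x(1) EV2 by blast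
  have "Q2\<^sup>*\<^sup>* x v" using x(2) pA[OF v] by (meson rtranclp_trans)
  moreover have "Q1\<^sup>*\<^sup>* x v"
  proof -
    have "Q1\<^sup>*\<^sup>* x u" using sym1[OF x(1)] by blast
    moreover have "Q1\<^sup>*\<^sup>* u (pB v)" using s1[OF conjunct2[OF pB[OF u]]] b by simp
    ultimately show ?thesis using conjunct2[OF pB[OF v]] by (meson rtranclp_trans)
  qed
  ultimately have "x = v" using uniq xV by blast
  then show ?thesis using x QE1 by blast
qed

lemma back2: "u \<in> V \<Longrightarrow> v \<in> V \<Longrightarrow> EB (pB u) (pB v) \<Longrightarrow> pA u = pA v \<Longrightarrow> E u v"
proof -
  assume u: "u \<in> V" and v: "v \<in> V" and e: "EB (pB u) (pB v)" and b: "pA u = pA v"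
  have q: "Q2 (pB u) (pB v)"
  proof (rule ccontr)
    assume "\<not> Q2 (pB u) (pB v)"
    then have "Q1 (pB u) (pB v)" using cover e by (auto simp: EB_def)
    moreover have "Q2\<^sup>*\<^sup>* (pB u) (pB v)" using e s2 by (auto simp: EB_def BB_def intro: rtranclp_trans)
    moreover have "pB u \<in> V" using e EV1 by (auto simp: EB_def)
    ultimately have "pB u = pB v" using uniq by blast
    then show False using e Eirr by (auto simp: EB_def)
  qed
  obtain x where x: "Q2 u x" "Q1\<^sup>*\<^sup>* x (pB v)" using comm12[OF s1[OF conjunct2[OF pB[OF u]]] q] by blast
  have xV: "x \<in> V" using QE2 x(1) EV2 by blast
  have "Q1\<^sup>*\<^sup>* x v" using x(2) pB[OF v] by (meson rtranclp_trans)
  moreover have "Q2\<^sup>*\<^sup>* x v"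
  proof -
    have "Q2\<^sup>*\<^sup>* x u" using sym2[OF x(1)] by blast
    moreover have "Q2\<^sup>*\<^sup>* u (pA v)" using s2[OF conjunct2[OF pA[OF u]]] b by simp
    ultimately show ?thesis using conjunct2[OF pA[OF v]] by (meson rtranclp_trans)
  qed
  ultimately have "x = v" using uniq xV by blast
  then show ?thesis using x QE2 by blast
qed

lemma adj: "u \<in> V \<Longrightarrow> v \<in> V \<Longrightarrow> E u v \<longleftrightarrow> cart_adj EA EB (ff u) (ff v)"
proof
  assume u: "u \<in> V" and v: "v \<in> V" and e: "E u v"
  show "cart_adj EA EB (ff u) (ff v)"
    using cover[OF e] adj1[OF u v] adj2[OF u v] by (auto simp: cart_adj_def ff_def)
next
  assume u: "u \<in> V" and v: "v \<in> V" and e: "cart_adj EA EB (ff u) (ff v)"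
  then show "E u v" using back1[OF u v] back2[OF u v] by (auto simp: cart_adj_def ff_def)
qed

lemma product:
  assumes c: "Q1 z c" and e: "Q2 z e"
  shows "simple_graph AA EA \<and> simple_graph BB EB \<and> card AA \<ge> 2 \<and> card BB \<ge> 2
        \<and> bij_betw ff V (AA \<times> BB) \<and> (\<forall>u\<in>V. \<forall>v\<in>V. E u v \<longleftrightarrow> cart_adj EA EB (ff u) (ff v))"
proof -
  have "{z, c} \<subseteq> AA" using c by (auto simp: AA_def)
  moreover have "z \<noteq> c" using QE1[OF c] Eirr by blast
  moreover have "finite AA" using AA_V finV finite_subset by blast
  ultimately have cA: "card AA \<ge> 2" using card_mono[of AA "{z, c}"] by simp
  have "{z, e} \<subseteq> BB" using e by (auto simp: BB_def)
  moreover have "z \<noteq> e" using QE2[OF e] Eirr by blast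
  moreover have "finite BB" using BB_V finV finite_subset by blast
  ultimately have cB: "card BB \<ge> 2" using card_mono[of BB "{z, e}"] by simp
  show ?thesis using sgA sgB cA cB bij adj by blast
qed

end

lemma emb_graph:
  assumes sgA: "simple_graph (A::'b set) EA" and inj: "inj_on h A"
  shows "simple_graph (h ` A) (\<lambda>i j. \<exists>a\<in>A. \<exists>a'\<in>A. i = h a \<and> j = h a' \<and> EA a a')"
    and "card (h ` A) = card A"
proof -
  have fin: "finite A" using sgA by (simp add: simple_graph_def)
  have sym: "\<And>a a'. EA a a' \<Longrightarrow> EA a' a" and irr: "\<And>a. \<not> EA a a" using sgA by (auto simp: simple_graph_def)
  show "simple_graph (h ` A) (\<lambda>i j. \<exists>a\<in>A. \<exists>a'\<in>A. i = h a \<and> j = h a' \<and> EA a a')"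
  proof -
    let ?G = "\<lambda>i j. \<exists>a\<in>A. \<exists>a'\<in>A. i = h a \<and> j = h a' \<and> EA a a'"
    have 1: "finite (h ` A)" using fin by simp
    have 2: "\<forall>u v. ?G u v \<longrightarrow> u \<in> h ` A \<and> v \<in> h ` A" by blast
    have 3: "\<forall>u v. ?G u v \<longrightarrow> ?G v u" using sym by blast
    have 4: "\<forall>u. \<not> ?G u u" using inj irr unfolding inj_on_def by metis
    show ?thesis unfolding simple_graph_def using 1 2 3 4 by blast
  qed
  show "card (h ` A) = card A" using card_image[OF inj] .
qed

lemma to_nat:
  assumes finV: "finite V" and sgA: "simple_graph (A::'b set) EA" and sgB: "simple_graph (B::'c set) EB"
    and cA: "card A \<ge> 2" and cB: "card B \<ge> 2" and bij: "bij_betw f V (A \<times> B)"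
    and adj: "\<forall>u\<in>V. \<forall>v\<in>V. E u v \<longleftrightarrow> cart_adj EA EB (f u) (f v)"
  shows "is_cartesian_product V E"
proof -
  have finA: "finite A" using sgA by (simp add: simple_graph_def)
  have finB: "finite B" using sgB by (simp add: simple_graph_def)
  obtain hA :: "'b \<Rightarrow> nat" and nA where hA: "hA ` A = {i. i < nA}" "inj_on hA A"
    using finite_imp_inj_to_nat_seg[OF finA] by blast
  obtain hB :: "'c \<Rightarrow> nat" and nB where hB: "hB ` B = {i. i < nB}" "inj_on hB B"
    using finite_imp_inj_to_nat_seg[OF finB] by blast
  define EA' where "EA' = (\<lambda>i j. \<exists>a\<in>A. \<exists>a'\<in>A. i = hA a \<and> j = hA a' \<and> EA a a')"
  define EB' where "EB' = (\<lambda>i j. \<exists>a\<in>B. \<exists>a'\<in>B. i = hB a \<and> j = hB a' \<and> EB a a')"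
  have g1: "simple_graph (hA ` A) EA'" "card (hA ` A) = card A"
    using emb_graph[OF sgA hA(2)] unfolding EA'_def by auto
  have g2: "simple_graph (hB ` B) EB'" "card (hB ` B) = card B"
    using emb_graph[OF sgB hB(2)] unfolding EB'_def by auto
  define F where "F = (\<lambda>v. map_prod hA hB (f v))"
  have bF: "bij_betw F V (hA ` A \<times> hB ` B)"
    unfolding F_def
    using bij_betw_trans[OF bij bij_betw_map_prod[OF inj_on_imp_bij_betw[OF hA(2)] inj_on_imp_bij_betw[OF hB(2)]]]
    by (simp add: comp_def)
  have adjF: "\<forall>u\<in>V. \<forall>v\<in>V. E u v \<longleftrightarrow> cart_adj EA' EB' (F u) (F v)"
  proof (intro ballI)
    fix u v assume u: "u \<in> V" and v: "v \<in> V"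
    have "f u \<in> A \<times> B" "f v \<in> A \<times> B" using bij u v by (auto simp: bij_betw_def)
    then obtain a b a' b' where fu: "f u = (a, b)" and a: "a \<in> A" and b: "b \<in> B"
      and fv: "f v = (a', b')" and a': "a' \<in> A" and b': "b' \<in> B" by (metis mem_Sigma_iff surj_pair)
    have ia: "hA a = hA a' \<longleftrightarrow> a = a'" using hA(2) a a' by (meson inj_on_eq_iff)
    have ib: "hB b = hB b' \<longleftrightarrow> b = b'" using hB(2) b b' by (meson inj_on_eq_iff)
    have ea: "EA' (hA a) (hA a') \<longleftrightarrow> EA a a'"
      unfolding EA'_def using hA(2) a a' by (auto simp: inj_on_def)
    have eb: "EB' (hB b) (hB b') \<longleftrightarrow> EB b b'"
      unfolding EB'_def using hB(2) b b' by (auto simp: inj_on_def)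
    show "E u v \<longleftrightarrow> cart_adj EA' EB' (F u) (F v)"
      using adj u v fu fv ia ib ea eb by (simp add: cart_adj_def F_def)
  qed
  show ?thesis unfolding is_cartesian_product_def
    apply (rule exI[of _ "hA ` A"])
    apply (rule exI[of _ EA'])
    apply (rule exI[of _ "hB ` B"])
    apply (rule exI[of _ EB'])
    apply (rule exI[of _ F])
    using g1 g2 cA cB bF adjF by simp
qed


theorem lemma2p7:
  fixes V :: "'a set" and E :: "'a \<Rightarrow> 'a \<Rightarrow> bool" and z :: 'a
  assumes "simple_graph V E"
    and "connected_graph V E"
    and "reflective V E"
    and "z \<in> V"
    and "disconnected_graph (sphere1 V E z) (induced E (sphere1 V E z))"
  shows "is_cartesian_product V E"
proof -
  interpret rg V E using assms(1-3) by unfold_locales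
  have zV: "z \<in> V" by (rule assms(4))
  define S where "S = sphere1 V E z"
  obtain u0 v0 where u0: "u0 \<in> S" and v0: "v0 \<in> S" and nr: "\<not> (\<exists>n. (induced E S ^^ n) u0 v0)"
    using assms(5) unfolding disconnected_graph_def S_def by blast
  have S_iff: "k \<in> S \<longleftrightarrow> k \<in> V \<and> E z k" for k
  proof
    assume k: "k \<in> S"
    then have kV: "k \<in> V" and dk: "d k z = 1" by (auto simp: S_def sphere1_def)
    have "(E ^^ 1) k z" using d_walk[OF kV zV] dk by simp
    then show "k \<in> V \<and> E z k" using kV Esym by (metis relpowp_1)
  next
    assume "k \<in> V \<and> E z k"
    then show "k \<in> S" using d_edge[of k z] Esym by (auto simp: S_def sphere1_def)
  qed
  define C where "C = {k. (induced E S)\<^sup>*\<^sup>* u0 k}"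
  have CinS: "c \<in> S" if "c \<in> C" for c
  proof -
    have "(induced E S)\<^sup>*\<^sup>* u0 c" using that by (simp add: C_def)
    then show ?thesis by (induction rule: rtranclp_induct) (use u0 in \<open>auto simp: induced_def\<close>)
  qed
  have CS: "E z c" if "c \<in> C" for c using CinS[OF that] S_iff by blast
  have Ccl: "k \<in> C" if "c \<in> C" "E z k" "E c k" for c k
  proof -
    have "k \<in> S" using S_iff that(2) EV2 by blast
    then have "induced E S c k" using CinS[OF that(1)] that(3) by (simp add: induced_def)
    then show ?thesis using that(1) by (auto simp: C_def intro: rtranclp.rtrancl_into_rtrancl)
  qed
  have v0C: "v0 \<notin> C"
  proof
    assume "v0 \<in> C"
    then have "(induced E S)\<^sup>*\<^sup>* u0 v0" by (simp add: C_def)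
    then show False using nr rtranclp_imp_relpowp[of "induced E S" u0 v0] by blast
  qed
  have u0C: "u0 \<in> C" by (simp add: C_def)
  have P1d: "P1 z C a b \<longleftrightarrow> E a b \<and> (\<exists>c\<in>C. theta a b z c)" for a b
  proof (rule P1_def[of z C])
    show "z \<in> V" by (rule zV)
    show "\<And>c. c \<in> C \<Longrightarrow> E z c" by (rule CS)
    show "\<And>c k. c \<in> C \<Longrightarrow> E z k \<Longrightarrow> E c k \<Longrightarrow> k \<in> C" by (rule Ccl)
  qed
  have P2d: "P2 z C a b \<longleftrightarrow> E a b \<and> \<not> (\<exists>c\<in>C. theta a b z c)" for a b
  proof (rule P2_def[of z C])
    show "z \<in> V" by (rule zV)
    show "\<And>c. c \<in> C \<Longrightarrow> E z c" by (rule CS)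
    show "\<And>c k. c \<in> C \<Longrightarrow> E z k \<Longrightarrow> E c k \<Longrightarrow> k \<in> C" by (rule Ccl)
  qed
  interpret rgp V E "P1 z C" "P2 z C" z
  proof unfold_locales
    show "\<And>a b. P1 z C a b \<Longrightarrow> E a b" by (simp add: P1d)
    show "\<And>a b. P2 z C a b \<Longrightarrow> E a b" by (simp add: P2d)
    show "\<And>a b. E a b \<Longrightarrow> P1 z C a b \<or> P2 z C a b" by (auto simp: P1d P2d)
    show "\<And>a b. \<not> (P1 z C a b \<and> P2 z C a b)" by (auto simp: P1d P2d)
    show "\<And>p q a b. E p q \<Longrightarrow> P1 z C a b \<Longrightarrow> theta p q a b \<Longrightarrow> P1 z C p q"
      by (rule P1_cl[of z C]) (assumption | rule zV | rule CS | rule Ccl)+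
    show "\<And>p q a b. E p q \<Longrightarrow> P2 z C a b \<Longrightarrow> theta p q a b \<Longrightarrow> P2 z C p q"
      by (rule P2_cl[of z C]) (assumption | rule zV | rule CS | rule Ccl)+
    show "\<And>a b. P1 z C a b \<Longrightarrow> P1 z C b a" by (rule P1_sym[of z C]) (assumption | rule zV | rule CS | rule Ccl)+
    show "\<And>a b. P2 z C a b \<Longrightarrow> P2 z C b a" by (rule P2_sym[of z C]) (assumption | rule zV | rule CS | rule Ccl)+
    show "z \<in> V" by (rule zV)
  qed
  have zu: "E z u0" using CS[OF u0C] .
  have zv: "E z v0" using v0 S_iff by blast
  have q1: "P1 z C z u0"
  proof -
    have "sig z u0 z = -1" using d_edge[OF zu] by (simp add: sig_def)
    moreover have "sig z u0 u0 = 1" using d_edge[OF zu] by (simp add: sig_def d_sym)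
    ultimately have "theta z u0 z u0" by (simp add: theta_def)
    then show ?thesis using zu u0C by (auto simp: P1d)
  qed
  have q2: "P2 z C z v0"
  proof -
    have "\<not> theta z v0 z c" if c: "c \<in> C" for c
    proof -
      have zc: "E z c" using CS[OF c] .
      have "c \<noteq> v0" using c v0C by blast
      moreover have "\<not> E c v0" using Ccl[OF c zv] v0C by blast
      ultimately have "d c v0 = 2" using d_two[OF zc zv] by blast
      then have "sig z c v0 = -1" using d_edge[OF zv] by (simp add: sig_def d_sym)
      moreover have "sig z c z = -1" using d_edge[OF zc] by (simp add: sig_def)
      ultimately show ?thesis by (simp add: theta_def)
    qed
    then show ?thesis using zv by (auto simp: P2d)
  qed
  have P: "simple_graph AA EA \<and> simple_graph BB EB \<and> card AA \<ge> 2 \<and> card BB \<ge> 2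
        \<and> bij_betw ff V (AA \<times> BB) \<and> (\<forall>u\<in>V. \<forall>v\<in>V. E u v \<longleftrightarrow> cart_adj EA EB (ff u) (ff v))"
    using product[OF q1 q2] .
  show ?thesis using to_nat[OF finV] P by blast
qed

end
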